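(* The Koszul vector $\vec{k}= (k_1, \cdots, k_v)\in\mathbb{Z}_{+}^{v}$ associated to the standard complex structure $J_0$ on a flag manifold of classical type is given by \[ \begin{array}{ll} \mathrm{SU}_{n+1}/\mathrm{U}_1^{n_0}\times \mathrm{S}(\mathrm{U}_{n_1}\times\cdots\times\mathrm{U}_{n_s}): & \vec{k} = (2,\cdots, 2, 1+ n_1, n_1+n_2, \cdots, n_{s-1}+ n_s ), \\ \mathrm{SO}_{2n+1}/\mathrm{U}_1^{n_0}\times \mathrm{U}_{n_1}\times\cdots\times\mathrm{U}_{n_s}\times\mathrm{SO}_{2r+1}: & \vec{k} =(2,\cdots, 2, 1+ n_1, n_1+n_2, \cdots, n_{s-1}+ n_s, n_s+ 2r ), \\ \mathrm{Sp}_{n}/\mathrm{U}_1^{n_0}\times \mathrm{U}_{n_1}\times\cdots\times\mathrm{U}_{n_s}\times\mathrm{Sp}_{r}: & \vec{k} =(2,\cdots, 2, 1+ n_1, n_1+n_2, \cdots, n_{s-1}+ n_s, n_s+2r +1), \\ \mathrm{SO}_{2n}/\mathrm{U}_1^{n_0}\times \mathrm{U}_{n_1}\times\cdots\times\mathrm{U}_{n_s}\times\mathrm{SO}_{2r}: & \vec{k} =(2,\cdots, 2, 1+ n_1, n_1+n_2, \cdots, n_{s-1}+ n_s, n_s+2r-1), \end{array} \] with $n_0$ entries equal to $2$. If $r=0$, then the last Koszul number (over the end black root) is $2n_s$ for the $\mathrm{SO}_{2n+1}$ case, $n_s+1$ for the $\mathrm{Sp}_n$ case and $2(n_{s}-1)$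 for the $\mathrm{SO}_{2n}$ case.
   Context: Flag manifolds of the classical groups are $\mathrm{SU}_{n+1}/\mathrm{U}_1^{n_0}\times \mathrm{S}(\mathrm{U}_{n_1}\times\cdots\times\mathrm{U}_{n_s})$ ($\sum n_j=n+1$, $n_0\ge0$, $n_j>1$), $\mathrm{SO}_{2n+1}/\mathrm{U}_1^{n_0}\times \mathrm{U}_{n_1}\times\cdots\times\mathrm{U}_{n_s}\times\mathrm{SO}_{2r+1}$, $\mathrm{Sp}_{n}/\mathrm{U}_1^{n_0}\times \mathrm{U}_{n_1}\times\cdots\times\mathrm{U}_{n_s}\times\mathrm{Sp}_{r}$, $\mathrm{SO}_{2n}/\mathrm{U}_1^{n_0}\times \mathrm{U}_{n_1}\times\cdots\times\mathrm{U}_{n_s}\times\mathrm{SO}_{2r}$ ($n=\sum n_j+r$, $n_j>1$, $r\ge0$, $r\neq1$ for $\mathrm{SO}_{2n}$). An invariant complex structure corresponds to a splitting $\Pi=\Pi_W\sqcup\Pi_B$ of simple roots into white and black roots (painted Dynkin diagram); the standard complex structure $J_0$ is the one whose painted Dynkin diagram has the first $n_0$ nodes black and all other black nodes isolated, separating white strings of lengths $n_1-1,\dots,n_s-1$ (followed, for $\mathrm{SO}_{2n+1},\mathrm{Sp}_n,\mathrm{SO}_{2n}$, by the white subdiagram of $\mathrm{SO}_{2r+1},\mathrm{Sp}_r,\mathrm{SO}_{2r}$). The Koszul form is $\sigma^{J}=\sum_{\alpha\in R^+\setminus R^+_H}\alpha=\sum_{j=1}^v k_j\Lambda_j$, where $\Lambda_j$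 are the fundamental weights of the black simple roots $\beta_j$; the integers $k_j$ are the Koszul numbers. *)

theory Defs
  imports Complex_Main
begin

text \<open>Classical root systems in the standard orthonormal realisation.
  Weights are integer vectors, represented as functions nat => int; only the
  coordinates below ncoords are relevant.  Coordinates and simple roots are
  indexed from 0.\<close>

datatype ctype = TA | TB | TC | TD
  (* TA: SU_{n+1} (A_n), TB: SO_{2n+1} (B_n), TC: Sp_n (C_n), TD: SO_{2n} (D_n) *)

definition e :: "nat \<Rightarrow> nat \<Rightarrow> int" where
  "e i = (\<lambda>x. if x = i then 1 else 0)"

definition ncoords :: "ctype \<Rightarrow> nat \<Rightarrow> nat" where
  "ncoords T n = (if T = TA then n + 1 else n)"

definition inner :: "nat \<Rightarrow> (nat \<Rightarrow> int) \<Rightarrow> (nat \<Rightarrow> int) \<Rightarrow> int" where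
  "inner N u v = (\<Sum>x<N. u x * v x)"

definition pos_roots :: "ctype \<Rightarrow> nat \<Rightarrow> (nat \<Rightarrow> int) set" where
  "pos_roots T n =
    (if T = TA then {(\<lambda>x. e i x - e j x) | i j. i < j \<and> j \<le> n}
     else {(\<lambda>x. e i x - e j x) | i j. i < j \<and> j < n}
        \<union> {(\<lambda>x. e i x + e j x) | i j. i < j \<and> j < n}
        \<union> (if T = TB then {e i | i. i < n}
           else if T = TC then {(\<lambda>x. 2 * e i x) | i. i < n}
           else {}))"

text \<open>Simple roots alpha_0, ..., alpha_{n-1} (Bourbaki ordering).\<close>
definition simple_root :: "ctype \<Rightarrow> nat \<Rightarrow> nat \<Rightarrow> (nat \<Rightarrow> int)" where
  "simple_root T n i =
    (if T = TA \<or> i + 1 < n then (\<lambda>x. e i x - e (i + 1) x)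
     else if T = TB then e (n - 1)
     else if T = TC then (\<lambda>x. 2 * e (n - 1) x)
     else (\<lambda>x. e (n - 2) x + e (n - 1) x))"

text \<open>A painted Dynkin diagram: list of length n, entry i is True iff the simple
  root alpha_i is black.\<close>
definition in_span_white :: "ctype \<Rightarrow> nat \<Rightarrow> bool list \<Rightarrow> (nat \<Rightarrow> int) \<Rightarrow> bool" where
  "in_span_white T n black \<alpha> =
    (\<exists>c :: nat \<Rightarrow> int. \<alpha> = (\<lambda>x. \<Sum>i\<in>{i. i < n \<and> \<not> black ! i}. c i * simple_root T n i x))"

definition pos_roots_H :: "ctype \<Rightarrow> nat \<Rightarrow> bool list \<Rightarrow> (nat \<Rightarrow> int) set" where
  "pos_roots_H T n black = {\<alpha> \<in> pos_roots T n. in_span_white T n black \<alpha>}"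

definition koszul_form :: "ctype \<Rightarrow> nat \<Rightarrow> bool list \<Rightarrow> (nat \<Rightarrow> int)" where
  "koszul_form T n black =
    (\<lambda>x. \<Sum>\<alpha>\<in>pos_roots T n - pos_roots_H T n black. \<alpha> x)"

text \<open>Coefficient of a weight lambda at the fundamental weight of the simple root
  beta, i.e. the coroot pairing 2(lambda,beta)/(beta,beta).\<close>
definition coroot_pairing :: "ctype \<Rightarrow> nat \<Rightarrow> (nat \<Rightarrow> int) \<Rightarrow> (nat \<Rightarrow> int) \<Rightarrow> rat" where
  "coroot_pairing T n w \<beta> =
    of_int (2 * inner (ncoords T n) w \<beta>) / of_int (inner (ncoords T n) \<beta> \<beta>)"

definition koszul_numbers :: "ctype \<Rightarrow> nat \<Rightarrow> bool list \<Rightarrow> rat list" where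
  "koszul_numbers T n black =
    map (\<lambda>i. coroot_pairing T n (koszul_form T n black) (simple_root T n i))
        (filter (\<lambda>i. black ! i) [0..<n])"

text \<open>The flag manifold data: n0 = number of U_1 factors, ns = [n_1,...,n_s],
  r = rank of the last factor SO_{2r+1} / Sp_r / SO_{2r} (unused for type A).\<close>
definition flag_rank :: "ctype \<Rightarrow> nat \<Rightarrow> nat list \<Rightarrow> nat \<Rightarrow> nat" where
  "flag_rank T n0 ns r =
    (if T = TA then n0 + sum_list ns - 1 else n0 + sum_list ns + r)"

definition J0_diagram :: "ctype \<Rightarrow> nat \<Rightarrow> nat list \<Rightarrow> nat \<Rightarrow> bool list" where
  "J0_diagram T n0 ns r =
    (let d = replicate n0 True @ concat (map (\<lambda>m. replicate (m - 1) False @ [True]) ns)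
     in if T = TA then butlast d else d @ replicate r False)"

definition koszul_expected :: "ctype \<Rightarrow> nat \<Rightarrow> nat list \<Rightarrow> nat \<Rightarrow> nat list" where
  "koszul_expected T n0 ns r =
    (let L = replicate n0 1 @ ns;
         adj = map (\<lambda>i. L ! i + L ! (i + 1)) [0..<length L - 1];
         ls = last ns
     in if T = TA then adj
        else if T = TB then adj @ [if r = 0 then 2 * ls else ls + 2 * r]
        else if T = TC then adj @ [ls + 2 * r + 1]
        else adj @ [if r = 0 then 2 * (ls - 1) else ls + 2 * r - 1])"

end

theory Submission
  imports Defs
begin


definition cnt :: "bool list \<Rightarrow> nat" where "cnt xs = length (filter id xs)"
definition gg :: "bool list \<Rightarrow> nat \<Rightarrow> nat" where "gg d x = cnt (take x d)"
definition dif :: "nat \<Rightarrow> nat \<Rightarrow> nat \<Rightarrow> int" where "dif i j = (\<lambda>x. e i x - e j x)"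
definition sm :: "nat \<Rightarrow> nat \<Rightarrow> nat \<Rightarrow> int" where "sm i j = (\<lambda>x. e i x + e j x)"

lemma gg_Suc: "k < length d \<Longrightarrow> gg d (Suc k) = gg d k + (if d!k then 1 else 0)"
  by (simp add: gg_def cnt_def take_Suc_conv_app_nth)

lemma gg_mono: "k \<le> j \<Longrightarrow> gg d k \<le> gg d j"
proof -
  assume "k \<le> j"
  then have "take j d = take k d @ take (j - k) (drop k d)" using take_add[of k "j - k" d] by simp
  then have "length (filter id (take j d)) = length (filter id (take k d)) + length (filter id (take (j - k) (drop k d)))"
    by simp
  then show ?thesis unfolding gg_def cnt_def by simp
qed

lemma gg_le: "gg d k \<le> cnt d"
proof -
  have "length (filter id d) = length (filter id (take k d @ drop k d))" by simp
  also have "\<dots> = length (filter id (take k d)) + length (filter id (drop k d))"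
    by (simp only: filter_append length_append)
  finally show ?thesis unfolding gg_def cnt_def by simp
qed

lemma gg_len: "length d \<le> k \<Longrightarrow> gg d k = cnt d"
  by (simp add: gg_def)

lemma sum_e: "finite S \<Longrightarrow> (\<Sum>y\<in>S. e i y) = (if i \<in> S then 1 else 0)"
  by (simp add: e_def sum.delta')

lemma sum_mult_e: "finite S \<Longrightarrow> (\<Sum>y\<in>S. u y * e i y) = (if i \<in> S then u i else 0)"
  by (simp add: e_def if_distrib sum.delta' cong: if_cong)

lemma inner_dif: "i < N \<Longrightarrow> j < N \<Longrightarrow> inner N u (dif i j) = u i - u j"
  by (simp add: inner_def dif_def right_diff_distrib sum_subtractf sum_mult_e)

lemma inner_e: "i < N \<Longrightarrow> inner N u (e i) = u i"
  by (simp add: inner_def sum_mult_e)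

lemma inner_2e: "i < N \<Longrightarrow> inner N u (\<lambda>x. 2 * e i x) = 2 * u i"
  by (simp add: inner_def sum_mult_e mult.left_commute[of _ 2] sum_distrib_left[symmetric])

lemma inner_sm: "i < N \<Longrightarrow> j < N \<Longrightarrow> inner N u (sm i j) = u i + u j"
  by (simp add: inner_def sm_def distrib_left sum.distrib sum_mult_e)

lemma dif_ne: "i \<noteq> j \<Longrightarrow> dif i j i = 1 \<and> dif i j j = -1"
  by (simp add: dif_def e_def)




abbreviation "isp \<equiv> in_span_white"

lemma isp_add: "isp T n d u \<Longrightarrow> isp T n d v \<Longrightarrow> isp T n d (\<lambda>x. u x + v x)"
  unfolding in_span_white_def
proof (elim exE)
  fix c c' assume u: "u = (\<lambda>x. \<Sum>i\<in>{i. i < n \<and> \<not> d ! i}. c i * simple_root T n i x)"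
    and v: "v = (\<lambda>x. \<Sum>i\<in>{i. i < n \<and> \<not> d ! i}. c' i * simple_root T n i x)"
  show "\<exists>c''. (\<lambda>x. u x + v x) = (\<lambda>x. \<Sum>i\<in>{i. i < n \<and> \<not> d ! i}. c'' i * simple_root T n i x)"
    by (rule exI[of _ "\<lambda>i. c i + c' i"]) (simp add: u v distrib_right sum.distrib)
qed

lemma isp_scale: "isp T n d u \<Longrightarrow> isp T n d (\<lambda>x. z * u x)"
  unfolding in_span_white_def
proof (elim exE)
  fix c assume u: "u = (\<lambda>x. \<Sum>i\<in>{i. i < n \<and> \<not> d ! i}. c i * simple_root T n i x)"
  show "\<exists>c''. (\<lambda>x. z * u x) = (\<lambda>x. \<Sum>i\<in>{i. i < n \<and> \<not> d ! i}. c'' i * simple_root T n i x)"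
    by (rule exI[of _ "\<lambda>i. z * c i"]) (simp add: u sum_distrib_left mult.assoc)
qed

lemma isp_zero: "isp T n d (\<lambda>x. 0)"
  unfolding in_span_white_def by (rule exI[of _ "\<lambda>i. 0"]) simp

lemma isp_sr: "k < n \<Longrightarrow> \<not> d ! k \<Longrightarrow> isp T n d (simple_root T n k)"
  unfolding in_span_white_def
proof (intro exI[of _ "\<lambda>i. if i = k then 1 else 0"] ext)
  fix x assume "k < n" "\<not> d ! k"
  have "(\<Sum>i\<in>{i. i < n \<and> \<not> d ! i}. (if i = k then 1 else 0) * simple_root T n i x)
      = (\<Sum>i\<in>{i. i < n \<and> \<not> d ! i}. (if i = k then simple_root T n i x else 0))"
    by (rule sum.cong) auto
  also have "\<dots> = simple_root T n k x" using \<open>k < n\<close> \<open>\<not> d ! k\<close> by (simp add: sum.delta')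
  finally show "simple_root T n k x = (\<Sum>i\<in>{i. i < n \<and> \<not> d ! i}. (if i = k then 1 else 0) * simple_root T n i x)" by simp
qed

lemma isp_F:
  assumes "isp T n d v" and "finite S"
    and "\<And>k. k < n \<Longrightarrow> \<not> d ! k \<Longrightarrow> (\<Sum>y\<in>S. simple_root T n k y) = 0"
  shows "(\<Sum>y\<in>S. v y) = 0"
proof -
  obtain c where v: "v = (\<lambda>x. \<Sum>i\<in>{i. i < n \<and> \<not> d ! i}. c i * simple_root T n i x)"
    using assms(1) unfolding in_span_white_def by blast
  have "(\<Sum>y\<in>S. v y) = (\<Sum>i\<in>{i. i < n \<and> \<not> d ! i}. c i * (\<Sum>y\<in>S. simple_root T n i y))"
    by (simp add: v sum_distrib_left) (rule sum.swap)
  also have "\<dots> = 0" using assms(3) by simp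
  finally show ?thesis .
qed

lemma isp_dif:
  assumes sr: "\<And>k. k < j \<Longrightarrow> k < n \<and> simple_root T n k = dif k (Suc k)"
    and ln: "length d = n"
    and ij: "i \<le> j" and g: "gg d i = gg d j"
  shows "isp T n d (dif i j)"
  using ij g sr
proof (induction j)
  case 0
  then have "dif i 0 = (\<lambda>x. 0)" by (simp add: dif_def)
  then show ?case by (simp add: isp_zero)
next
  case (Suc j)
  show ?case
  proof (cases "i = Suc j")
    case True
    then have "dif i (Suc j) = (\<lambda>x. 0)" by (simp add: dif_def)
    then show ?thesis by (simp add: isp_zero)
  next
    case False
    then have ij: "i \<le> j" using Suc.prems by simp
    have jn: "j < n" and srj: "simple_root T n j = dif j (Suc j)" using Suc.prems(3)[of j] by auto
    have m1: "gg d i \<le> gg d j" "gg d j \<le> gg d (Suc j)" using ij by (auto intro: gg_mono)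
    have gj: "gg d j = gg d (Suc j)" using m1 Suc.prems(2) by simp
    then have wj: "\<not> d ! j" using gg_Suc[of j d] jn ln by (auto split: if_splits)
    have IH: "isp T n d (dif i j)" using Suc.IH ij gj Suc.prems by auto
    have "isp T n d (\<lambda>x. dif i j x + dif j (Suc j) x)"
      using isp_add[OF IH isp_sr[OF jn wj]] srj by simp
    moreover have "(\<lambda>x. dif i j x + dif j (Suc j) x) = dif i (Suc j)" by (simp add: dif_def fun_eq_iff)
    ultimately show ?thesis by simp
  qed
qed




lemma sum_ind_card: "finite P \<Longrightarrow> (\<Sum>p\<in>P. (if Q p then 1 else 0::int)) = int (card {p\<in>P. Q p})"
  by (simp add: sum.inter_filter[symmetric])

lemma card_fst: "finite P \<Longrightarrow> card {p\<in>P. fst p = x} = card {j. (x, j) \<in> P}"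
proof -
  assume fP: "finite P"
  have "{p\<in>P. fst p = x} = Pair x ` {j. (x, j) \<in> P}" by force
  moreover have "inj_on (Pair x) {j. (x, j) \<in> P}" by (simp add: inj_on_def)
  ultimately show ?thesis using card_image by simp
qed

lemma card_snd: "finite P \<Longrightarrow> card {p\<in>P. snd p = x} = card {i. (i, x) \<in> P}"
proof -
  assume fP: "finite P"
  have "{p\<in>P. snd p = x} = (\<lambda>i. (i, x)) ` {i. (i, x) \<in> P}" by force
  moreover have "inj_on (\<lambda>i. (i, x)) {i. (i, x) \<in> P}" by (simp add: inj_on_def)
  ultimately show ?thesis using card_image by simp
qed

lemma sum_fst_e: "finite P \<Longrightarrow> (\<Sum>p\<in>P. e (fst p) x) = int (card {j. (x, j) \<in> P})"
proof -
  assume f: "finite P"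
  have "(\<Sum>p\<in>P. e (fst p) x) = (\<Sum>p\<in>P. (if fst p = x then 1 else 0))"
    by (rule sum.cong) (auto simp: e_def)
  then show ?thesis using sum_ind_card[OF f, of "\<lambda>p. fst p = x"] card_fst[OF f] by simp
qed

lemma sum_snd_e: "finite P \<Longrightarrow> (\<Sum>p\<in>P. e (snd p) x) = int (card {i. (i, x) \<in> P})"
proof -
  assume f: "finite P"
  have "(\<Sum>p\<in>P. e (snd p) x) = (\<Sum>p\<in>P. (if snd p = x then 1 else 0))"
    by (rule sum.cong) (auto simp: e_def)
  then show ?thesis using sum_ind_card[OF f, of "\<lambda>p. snd p = x"] card_snd[OF f] by simp
qed

lemma pairsum_dif: "finite P \<Longrightarrow> (\<Sum>p\<in>P. dif (fst p) (snd p) x)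
   = int (card {j. (x, j) \<in> P}) - int (card {i. (i, x) \<in> P})"
  by (simp add: dif_def sum_subtractf sum_fst_e sum_snd_e)

lemma pairsum_sm: "finite P \<Longrightarrow> (\<Sum>p\<in>P. sm (fst p) (snd p) x)
   = int (card {j. (x, j) \<in> P}) + int (card {i. (i, x) \<in> P})"
  by (simp add: sm_def sum.distrib sum_fst_e sum_snd_e)

lemma inj_dif: "inj_on (\<lambda>p. dif (fst p) (snd p)) {p. fst p < snd p}"
proof (rule inj_onI)
  fix p q :: "nat \<times> nat"
  assume p: "p \<in> {p. fst p < snd p}" and q: "q \<in> {p. fst p < snd p}"
    and eq: "dif (fst p) (snd p) = dif (fst q) (snd q)"
  obtain a b c d where pq: "p = (a, b)" "q = (c, d)" by (cases p, cases q) auto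
  then have ab: "a < b" "c < d" using p q by auto
  have ev: "\<And>y. dif a b y = dif c d y" using eq pq by simp
  have "dif c d a = 1" using ev[of a] ab by (simp add: dif_def e_def)
  then have "a = c" by (simp add: dif_def e_def split: if_splits)
  moreover have "dif c d b = -1" using ev[of b] ab by (simp add: dif_def e_def)
  then have "b = d" by (simp add: dif_def e_def split: if_splits)
  ultimately show "p = q" using pq by simp
qed

lemma inj_sm: "inj_on (\<lambda>p. sm (fst p) (snd p)) {p. fst p < snd p}"
proof (rule inj_onI)
  fix p q :: "nat \<times> nat"
  assume p: "p \<in> {p. fst p < snd p}" and q: "q \<in> {p. fst p < snd p}"
    and eq: "sm (fst p) (snd p) = sm (fst q) (snd q)"
  obtain a b c d where pq: "p = (a, b)" "q = (c, d)" by (cases p, cases q) auto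
  then have ab: "a < b" "c < d" using p q by auto
  have ev: "\<And>y. sm a b y = sm c d y" using eq pq by simp
  have nz: "\<And>x z y. sm x z y \<noteq> 0 \<longleftrightarrow> y = x \<or> y = z" by (simp add: sm_def e_def)
  have s: "\<And>y. (y = a \<or> y = b) \<longleftrightarrow> (y = c \<or> y = d)"
  proof -
    fix y show "(y = a \<or> y = b) \<longleftrightarrow> (y = c \<or> y = d)"
      using ev[of y] nz[of a b y] nz[of c d y] by simp
  qed
  have "a = c \<or> a = d" "b = c \<or> b = d" "c = a \<or> c = b" "d = a \<or> d = b"
    using s[of a] s[of b] s[of c] s[of d] by simp_all
  then have "a = c \<and> b = d" using ab by presburger
  then show "p = q" using pq by simp
qed




lemma card_gt_split: "finite A \<Longrightarrow> card {y\<in>A. b < f y} = card {y\<in>A. Suc b < f y} + card {y\<in>A. f y = Suc b}"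
proof -
  assume fA: "finite A"
  have "{y\<in>A. b < f y} = {y\<in>A. Suc b < f y} \<union> {y\<in>A. f y = Suc b}" by auto
  moreover have "{y\<in>A. Suc b < f y} \<inter> {y\<in>A. f y = Suc b} = {}" by auto
  ultimately show ?thesis using fA by (simp add: card_Un_disjoint)
qed

lemma card_lt_split: "finite A \<Longrightarrow> card {y\<in>A. f y < Suc b} = card {y\<in>A. f y < b} + card {y\<in>A. f y = b}"
proof -
  assume fA: "finite A"
  have "{y\<in>A. f y < Suc b} = {y\<in>A. f y < b} \<union> {y\<in>A. f y = b}" by auto
  moreover have "{y\<in>A. f y < b} \<inter> {y\<in>A. f y = b} = {}" by auto
  ultimately show ?thesis using fA by (simp add: card_Un_disjoint)
qed

lemma sum_dif_S: "finite S \<Longrightarrow> (\<Sum>y\<in>S. dif a b y) = (if a \<in> S then 1 else 0) - (if b \<in> S then 1 else 0)"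
  by (simp add: dif_def sum_subtractf sum_e)

lemma srA: "simple_root TA n k = dif k (Suc k)"
  by (simp add: simple_root_def dif_def fun_eq_iff)

lemma setcomp_pair: "{f i j |i j. P i j} = (\<lambda>p. f (fst p) (snd p)) ` {p. P (fst p) (snd p)}"
proof (rule set_eqI, rule iffI)
  fix a assume "a \<in> {f i j |i j. P i j}"
  then obtain i j where "a = f i j" "P i j" by blast
  then show "a \<in> (\<lambda>p. f (fst p) (snd p)) ` {p. P (fst p) (snd p)}"
    by (intro image_eqI[where x="(i, j)"]) auto
next
  fix a assume "a \<in> (\<lambda>p. f (fst p) (snd p)) ` {p. P (fst p) (snd p)}"
  then obtain p where "a = f (fst p) (snd p)" "P (fst p) (snd p)" by blast
  then show "a \<in> {f i j |i j. P i j}" by blast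
qed

lemma posA: "pos_roots TA n = (\<lambda>p. dif (fst p) (snd p)) ` {p. fst p < snd p \<and> snd p \<le> n}"
  unfolding pos_roots_def dif_def by (simp add: setcomp_pair)

lemma ispA:
  assumes ln: "length d = n" and ij: "i < j" "j \<le> n"
  shows "isp TA n d (dif i j) \<longleftrightarrow> gg d i = gg d j"
proof
  assume g: "gg d i = gg d j"
  show "isp TA n d (dif i j)"
    by (rule isp_dif[OF _ ln _ g]) (use ij in \<open>auto simp: srA\<close>)
next
  assume isp: "isp TA n d (dif i j)"
  show "gg d i = gg d j"
  proof (rule ccontr)
    assume ne: "gg d i \<noteq> gg d j"
    let ?S = "{y. y \<le> n \<and> gg d y = gg d i}"
    have "(\<Sum>y\<in>?S. dif i j y) = 0"
    proof (rule isp_F[OF isp])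
      fix k assume k: "k < n" "\<not> d ! k"
      then have "gg d (Suc k) = gg d k" using gg_Suc[of k d] ln by simp
      then show "(\<Sum>y\<in>?S. simple_root TA n k y) = 0"
        using k by (simp add: srA sum_dif_S)
    qed simp
    moreover have "(\<Sum>y\<in>?S. dif i j y) = 1" using ij ne by (simp add: sum_dif_S)
    ultimately show False by simp
  qed
qed

definition PA :: "nat \<Rightarrow> bool list \<Rightarrow> (nat \<times> nat) set" where
  "PA n d = {p. fst p < snd p \<and> snd p \<le> n \<and> gg d (fst p) \<noteq> gg d (snd p)}"

lemma complA:
  assumes ln: "length d = n"
  shows "pos_roots TA n - pos_roots_H TA n d = (\<lambda>p. dif (fst p) (snd p)) ` PA n d"
proof -
  have "pos_roots TA n - pos_roots_H TA n d = {\<alpha>\<in>pos_roots TA n. \<not> isp TA n d \<alpha>}"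
    by (auto simp: pos_roots_H_def)
  also have "\<dots> = (\<lambda>p. dif (fst p) (snd p)) ` PA n d"
    unfolding posA PA_def using ispA[OF ln] by auto
  finally show ?thesis .
qed

lemma finite_PA: "finite (PA n d)"
proof -
  have "PA n d \<subseteq> {..n} \<times> {..n}" by (auto simp: PA_def)
  then show ?thesis by (rule finite_subset) simp
qed

lemma sigmaA:
  assumes ln: "length d = n" and x: "x \<le> n"
  shows "koszul_form TA n d x = int (card {j\<in>{..n}. gg d x < gg d j}) - int (card {i\<in>{..n}. gg d i < gg d x})"
proof -
  have "koszul_form TA n d x = (\<Sum>p\<in>PA n d. dif (fst p) (snd p) x)"
    unfolding koszul_form_def complA[OF ln]
    by (rule sum.reindex[unfolded comp_def]) (rule inj_on_subset[OF inj_dif], auto simp: PA_def)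
  also have "\<dots> = int (card {j. (x, j) \<in> PA n d}) - int (card {i. (i, x) \<in> PA n d})"
    by (rule pairsum_dif[OF finite_PA])
  also have "{j. (x, j) \<in> PA n d} = {j\<in>{..n}. gg d x < gg d j}"
  proof (rule set_eqI, rule iffI)
    fix j assume "j \<in> {j. (x, j) \<in> PA n d}"
    then have "x < j" "j \<le> n" "gg d x \<noteq> gg d j" by (auto simp: PA_def)
    moreover have "gg d x \<le> gg d j" using \<open>x < j\<close> by (simp add: gg_mono)
    ultimately show "j \<in> {j\<in>{..n}. gg d x < gg d j}" by simp
  next
    fix j assume "j \<in> {j\<in>{..n}. gg d x < gg d j}"
    then have a: "j \<le> n" "gg d x < gg d j" by auto
    have "x < j" proof (rule ccontr)
      assume "\<not> x < j" then have "gg d j \<le> gg d x" by (simp add: gg_mono)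
      then show False using a by simp
    qed
    then show "j \<in> {j. (x, j) \<in> PA n d}" using a by (simp add: PA_def)
  qed
  also have "{i. (i, x) \<in> PA n d} = {i\<in>{..n}. gg d i < gg d x}"
  proof (rule set_eqI, rule iffI)
    fix j assume "j \<in> {j. (j, x) \<in> PA n d}"
    then have "j < x" "x \<le> n" "gg d j \<noteq> gg d x" by (auto simp: PA_def)
    moreover have "gg d j \<le> gg d x" using \<open>j < x\<close> by (simp add: gg_mono)
    ultimately show "j \<in> {j\<in>{..n}. gg d j < gg d x}" by simp
  next
    fix j assume "j \<in> {j\<in>{..n}. gg d j < gg d x}"
    then have a: "j \<le> n" "gg d j < gg d x" by auto
    have "j < x" proof (rule ccontr)
      assume "\<not> j < x" then have "gg d x \<le> gg d j" by (simp add: gg_mono)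
      then show False using a by simp
    qed
    then show "j \<in> {j. (j, x) \<in> PA n d}" using a x by (simp add: PA_def)
  qed
  finally show ?thesis .
qed

definition szA :: "nat \<Rightarrow> bool list \<Rightarrow> nat \<Rightarrow> nat" where
  "szA n d b = card {y\<in>{..n}. gg d y = b}"

lemma pairA:
  assumes ln: "length d = n" and k: "k < n"
  shows "coroot_pairing TA n (koszul_form TA n d) (simple_root TA n k)
     = (if d ! k then of_nat (szA n d (gg d k) + szA n d (Suc (gg d k))) else 0)"
proof -
  let ?s = "koszul_form TA n d"
  have i1: "inner (ncoords TA n) ?s (simple_root TA n k) = ?s k - ?s (Suc k)"
    using k by (simp add: srA ncoords_def inner_dif)
  have i2: "inner (ncoords TA n) (simple_root TA n k) (simple_root TA n k) = 2"
    using k by (simp add: srA ncoords_def inner_dif dif_ne)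
  have cp: "coroot_pairing TA n ?s (simple_root TA n k) = of_int (?s k - ?s (Suc k))"
    unfolding coroot_pairing_def i1 i2 by simp
  have gS: "gg d (Suc k) = gg d k + (if d ! k then 1 else 0)" using gg_Suc[of k d] k ln by simp
  show ?thesis
  proof (cases "d ! k")
    case False
    then show ?thesis using cp gS sigmaA[OF ln, of k] sigmaA[OF ln, of "Suc k"] k by simp
  next
    case True
    let ?b = "gg d k"
    have a: "card {j\<in>{..n}. ?b < gg d j} = card {j\<in>{..n}. Suc ?b < gg d j} + szA n d (Suc ?b)"
      unfolding szA_def by (rule card_gt_split) simp
    have b: "card {j\<in>{..n}. gg d j < Suc ?b} = card {j\<in>{..n}. gg d j < ?b} + szA n d ?b"
      unfolding szA_def by (rule card_lt_split) simp
    show ?thesis using cp gS sigmaA[OF ln, of k] sigmaA[OF ln, of "Suc k"] k True a b by simp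
  qed
qed




definition sh :: "ctype \<Rightarrow> nat \<Rightarrow> nat \<Rightarrow> int" where
  "sh T i = (if T = TB then e i else (\<lambda>x. 2 * e i x))"

definition eps :: "ctype \<Rightarrow> int" where
  "eps T = (if T = TB then 1 else if T = TC then 2 else 0)"

locale bcd =
  fixes T :: ctype and n :: nat and d :: "bool list"
  assumes nA: "T \<noteq> TA" and ln: "length d = n" and n2: "2 \<le> n"
    and Dw: "T = TD \<Longrightarrow> \<not> d ! (n - 2)"
begin

abbreviation "g \<equiv> gg d"
abbreviation "m \<equiv> cnt d"

lemma gn: "g n = m" using ln by (simp add: gg_len)

lemma gS: "k < n \<Longrightarrow> g (Suc k) = g k + (if d ! k then 1 else 0)"
  using gg_Suc[of k d] ln by simp

lemma sr_dif: "Suc k < n \<Longrightarrow> simple_root T n k = dif k (Suc k)"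
  by (simp add: simple_root_def dif_def)

lemma sr_last: "simple_root T n (n - 1) =
   (if T = TB then e (n - 1) else if T = TC then (\<lambda>x. 2 * e (n - 1) x) else sm (n - 2) (n - 1))"
  using nA n2 by (cases T) (auto simp: simple_root_def sm_def)

lemma srB: "simple_root TB n (n - Suc 0) = e (n - Suc 0)"
  using n2 by (simp add: simple_root_def)
lemma srC: "simple_root TC n (n - Suc 0) = (\<lambda>x. 2 * e (n - Suc 0) x)"
  using n2 by (simp add: simple_root_def)
lemma srD: "simple_root TD n (n - Suc 0) = sm (n - 2) (n - Suc 0)"
  using n2 by (simp add: simple_root_def sm_def)

lemma g_le: "g x \<le> m" by (rule gg_le)

lemma gD: "T = TD \<Longrightarrow> g (n - 2) = g (n - 1)"
  using gS[of "n - 2"] Dw n2 by (simp add: Suc_diff_Suc numeral_2_eq_2)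

lemma isp_difB: "i \<le> j \<Longrightarrow> j < n \<Longrightarrow> g i = g j \<Longrightarrow> isp T n d (dif i j)"
  by (rule isp_dif[OF _ ln]) (auto simp: sr_dif)

lemma lastwhite: "j < n \<Longrightarrow> g j = m \<Longrightarrow> \<not> d ! (n - 1) \<and> g (n - 1) = m"
proof -
  assume j: "j < n" "g j = m"
  have "g j \<le> g (n - 1)" using j by (intro gg_mono) simp
  moreover have "g n = g (n - 1) + (if d ! (n - 1) then 1 else 0)" using gS[of "n - 1"] n2 by simp
  ultimately show ?thesis using j gn g_le[of "n - 1"] by (auto split: if_splits)
qed

lemma isp_last: "j < n \<Longrightarrow> g j = m \<Longrightarrow> isp T n d (simple_root T n (n - 1))"
  using lastwhite isp_sr[of "n - 1" n d T] n2 by simp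

lemma g_top: "i \<le> j \<Longrightarrow> g i = m \<Longrightarrow> g j = m"
  using gg_mono[of i j d] g_le[of j] by simp

lemma isp_sh: "T \<noteq> TD \<Longrightarrow> i < n \<Longrightarrow> g i = m \<Longrightarrow> isp T n d (sh T i)"
proof -
  assume TD: "T \<noteq> TD" and i: "i < n" "g i = m"
  have gl: "g (n - 1) = m" using lastwhite[OF i] by simp
  have D: "isp T n d (dif i (n - 1))" using i gl by (intro isp_difB) auto
  have L: "isp T n d (simple_root T n (n - 1))" using isp_last[OF i] .
  show ?thesis
  proof (cases "T = TB")
    case True
    have "sh T i = (\<lambda>x. dif i (n - 1) x + simple_root T n (n - 1) x)"
      using True by (simp add: sh_def srB srC srD dif_def fun_eq_iff)
    then show ?thesis using isp_add[OF D L] by simp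
  next
    case False
    then have TC: "T = TC" using nA TD by (cases T) auto
    have "sh T i = (\<lambda>x. 2 * dif i (n - 1) x + simple_root T n (n - 1) x)"
      using TC by (simp add: sh_def srB srC srD dif_def fun_eq_iff algebra_simps)
    then show ?thesis using isp_add[OF isp_scale[OF D] L] by simp
  qed
qed

lemma isp_smB: "i < j \<Longrightarrow> j < n \<Longrightarrow> g i = m \<Longrightarrow> isp T n d (sm i j)"
proof -
  assume ij: "i < j" "j < n" and gi: "g i = m"
  have gj: "g j = m" using g_top[OF _ gi, of j] ij by simp
  have gl: "g (n - 1) = m" using lastwhite[OF ij(2) gj] by simp
  have L: "isp T n d (simple_root T n (n - 1))" using isp_last[OF ij(2) gj] .
  show ?thesis
  proof (cases "T = TD")
    case True
    have g2: "g (n - 2) = m" using gD[OF True] gl by simp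
    have D1: "isp T n d (dif i (n - 2))" using ij gi g2 by (intro isp_difB) auto
    have D2: "isp T n d (dif j (n - 1))" using ij gj gl by (intro isp_difB) auto
    have "sm i j = (\<lambda>x. (dif i (n - 2) x + dif j (n - 1) x) + simple_root T n (n - 1) x)"
      using True by (simp add: srB srC srD dif_def sm_def fun_eq_iff)
    then show ?thesis using isp_add[OF isp_add[OF D1 D2] L] by simp
  next
    case False
    have S1: "isp T n d (sh T i)" using isp_sh[OF False _ gi] ij by simp
    have S2: "isp T n d (sh T j)" using isp_sh[OF False _ gj] ij by simp
    have D1: "isp T n d (dif i (n - 1))" using ij gi gl by (intro isp_difB) auto
    have D2: "isp T n d (dif j (n - 1))" using ij gj gl by (intro isp_difB) auto
    show ?thesis
    proof (cases "T = TB")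
      case True
      have "sm i j = (\<lambda>x. sh T i x + sh T j x)" using True by (simp add: sh_def sm_def)
      then show ?thesis using isp_add[OF S1 S2] by simp
    next
      case F2: False
      then have TC: "T = TC" using nA False by (cases T) auto
      have "sm i j = (\<lambda>x. (dif i (n - 1) x + dif j (n - 1) x) + simple_root T n (n - 1) x)"
        using TC by (simp add: srB srC srD dif_def sm_def fun_eq_iff)
      then show ?thesis using isp_add[OF isp_add[OF D1 D2] L] by simp
    qed
  qed
qed

definition SS :: "nat \<Rightarrow> nat set" where "SS b = {y\<in>{..<n}. g y = b}"

lemma F_white: "b < m \<Longrightarrow> k < n \<Longrightarrow> \<not> d ! k \<Longrightarrow> (\<Sum>y\<in>SS b. simple_root T n k y) = 0"
proof -
  assume b: "b < m" and k: "k < n" "\<not> d ! k"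
  show ?thesis
  proof (cases "Suc k < n")
    case True
    have "g (Suc k) = g k" using gS[OF k(1)] k by simp
    then show ?thesis using True by (simp add: sr_dif sum_dif_S SS_def)
  next
    case False
    then have kk: "k = n - 1" using k by simp
    have gl: "g (n - 1) = m" using gS[of "n - 1"] n2 k kk gn by simp
    have f: "finite (SS b)" by (simp add: SS_def)
    have nl: "n - 1 \<notin> SS b" using gl b by (simp add: SS_def)
    show ?thesis
    proof (cases "T = TD")
      case True
      have "n - 2 \<notin> SS b" using gl b gD[OF True] by (simp add: SS_def)
      then show ?thesis using nl f True kk by (simp add: srD sm_def sum.distrib sum_e)
    next
      case False
      then show ?thesis using nl f kk by (cases T) (auto simp: srB srC sum_e sum_distrib_left[symmetric] nA)
    qed
  qed
qed

lemma isp_F_B: assumes "isp T n d v" "b < m" shows "(\<Sum>y\<in>SS b. v y) = 0"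
proof (rule isp_F[OF assms(1)])
  show "finite (SS b)" by (simp add: SS_def)
  fix k assume "k < n" "\<not> d ! k"
  then show "(\<Sum>y\<in>SS b. simple_root T n k y) = 0" using F_white assms(2) by blast
qed

lemma isp_dif_iff: "i < j \<Longrightarrow> j < n \<Longrightarrow> isp T n d (dif i j) \<longleftrightarrow> g i = g j"
proof
  assume "i < j" "j < n" "isp T n d (dif i j)"
  show "g i = g j"
  proof (rule ccontr)
    assume ne: "g i \<noteq> g j"
    have "g i \<le> g j" using \<open>i < j\<close> by (simp add: gg_mono)
    then have "g i < m" using ne g_le[of j] by simp
    then have "(\<Sum>y\<in>SS (g i). dif i j y) = 0" using isp_F_B \<open>isp T n d (dif i j)\<close> by blast
    moreover have "(\<Sum>y\<in>SS (g i). dif i j y) = 1" using \<open>i < j\<close> \<open>j < n\<close> ne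
      by (simp add: sum_dif_S SS_def)
    ultimately show False by simp
  qed
qed (auto intro: isp_difB)

lemma isp_sm_iff: "i < j \<Longrightarrow> j < n \<Longrightarrow> isp T n d (sm i j) \<longleftrightarrow> g i = m"
proof
  assume "i < j" "j < n" "isp T n d (sm i j)"
  show "g i = m"
  proof (rule ccontr)
    assume ne: "g i \<noteq> m"
    then have "g i < m" using g_le[of i] by simp
    then have "(\<Sum>y\<in>SS (g i). sm i j y) = 0" using isp_F_B \<open>isp T n d (sm i j)\<close> by blast
    moreover have "(\<Sum>y\<in>SS (g i). sm i j y) \<ge> 1" using \<open>i < j\<close> \<open>j < n\<close>
      by (simp add: sm_def sum.distrib sum_e SS_def)
    ultimately show False by simp
  qed
qed (auto intro: isp_smB)

lemma isp_sh_iff: "T \<noteq> TD \<Longrightarrow> i < n \<Longrightarrow> isp T n d (sh T i) \<longleftrightarrow> g i = m"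
proof
  assume "T \<noteq> TD" "i < n" "isp T n d (sh T i)"
  show "g i = m"
  proof (rule ccontr)
    assume ne: "g i \<noteq> m"
    then have "g i < m" using g_le[of i] by simp
    then have "(\<Sum>y\<in>SS (g i). sh T i y) = 0" using isp_F_B \<open>isp T n d (sh T i)\<close> by blast
    moreover have "(\<Sum>y\<in>SS (g i). sh T i y) \<ge> 1" using \<open>i < n\<close>
      by (simp add: sh_def sum_e SS_def sum_distrib_left[symmetric])
    ultimately show False by simp
  qed
qed (auto intro: isp_sh)

end



lemma dif_ne_sm: "i \<noteq> j \<Longrightarrow> dif i j \<noteq> sm a b"
proof
  assume "i \<noteq> j" "dif i j = sm a b"
  then have "dif i j j = sm a b j" by simp
  then show False using \<open>i \<noteq> j\<close> by (simp add: dif_def sm_def e_def split: if_splits)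
qed

lemma dif_ne_sh: "i \<noteq> j \<Longrightarrow> dif i j \<noteq> sh T c"
proof
  assume "i \<noteq> j" "dif i j = sh T c"
  then have "dif i j j = sh T c j" by simp
  then show False using \<open>i \<noteq> j\<close> by (simp add: dif_def sh_def e_def split: if_splits)
qed

lemma sm_ne_sh: "a \<noteq> b \<Longrightarrow> sm a b \<noteq> sh T c"
proof
  assume ab: "a \<noteq> b" and eq: "sm a b = sh T c"
  then have "sm a b a = sh T c a" "sm a b b = sh T c b" by simp_all
  then show False using ab by (simp add: sm_def sh_def e_def split: if_splits)
qed

lemma inj_sh: "inj_on (sh T) A"
proof (rule inj_onI)
  fix a b assume "sh T a = sh T b"
  then have "sh T a a = sh T b a" by simp
  then show "a = b" by (simp add: sh_def e_def split: if_splits)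
qed

lemma img_filter: "{a \<in> f ` Q. R a} = f ` {q\<in>Q. R (f q)}"
  by auto
lemma Un_filter: "{a \<in> A \<union> B. R a} = {a\<in>A. R a} \<union> {a\<in>B. R a}"
  by auto
lemma if_filter: "{a \<in> (if P then {} else A). R a} = (if P then {} else {a\<in>A. R a})"
  by auto

context bcd begin

definition P1 where "P1 = {p. fst p < snd p \<and> snd p < n \<and> g (fst p) \<noteq> g (snd p)}"
definition P2 where "P2 = {p. fst p < snd p \<and> snd p < n \<and> g (fst p) < m}"
definition P3 where "P3 = {i. i < n \<and> g i < m}"
definition SH3 where "SH3 = (if T = TD then {} else sh T ` P3)"

lemma fin12: "finite P1" "finite P2" "finite P3"
proof -
  have "P1 \<subseteq> {..<n} \<times> {..<n}" "P2 \<subseteq> {..<n} \<times> {..<n}" by (auto simp: P1_def P2_def)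
  then show "finite P1" "finite P2" by (auto intro: finite_subset)
  show "finite P3" by (simp add: P3_def)
qed

lemma posB: "pos_roots T n = (\<lambda>p. dif (fst p) (snd p)) ` {p. fst p < snd p \<and> snd p < n}
   \<union> (\<lambda>p. sm (fst p) (snd p)) ` {p. fst p < snd p \<and> snd p < n}
   \<union> (if T = TD then {} else sh T ` {..<n})"
proof -
  have "{e i |i. i < n} = sh TB ` {..<n}" by (auto simp: sh_def)
  moreover have "{\<lambda>x. 2 * e i x |i. i < n} = sh TC ` {..<n}" by (auto simp: sh_def)
  ultimately show ?thesis using nA
    unfolding pos_roots_def dif_def[abs_def] sm_def[abs_def]
    by (simp only: setcomp_pair[of "\<lambda>i j x. e i x - e j x"] setcomp_pair[of "\<lambda>i j x. e i x + e j x"])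
       (cases T, auto)
qed

lemma complB: "pos_roots T n - pos_roots_H T n d
   = (\<lambda>p. dif (fst p) (snd p)) ` P1 \<union> (\<lambda>p. sm (fst p) (snd p)) ` P2 \<union> SH3"
proof -
  have "pos_roots T n - pos_roots_H T n d = {\<alpha>\<in>pos_roots T n. \<not> isp T n d \<alpha>}"
    by (auto simp: pos_roots_H_def)
  also have "\<dots> = (\<lambda>p. dif (fst p) (snd p)) ` {p\<in>{p. fst p < snd p \<and> snd p < n}. \<not> isp T n d (dif (fst p) (snd p))}
     \<union> (\<lambda>p. sm (fst p) (snd p)) ` {p\<in>{p. fst p < snd p \<and> snd p < n}. \<not> isp T n d (sm (fst p) (snd p))}
     \<union> (if T = TD then {} else sh T ` {i\<in>{..<n}. \<not> isp T n d (sh T i)})"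
    unfolding posB by (simp only: Un_filter if_filter img_filter)
  also have "{p\<in>{p. fst p < snd p \<and> snd p < n}. \<not> isp T n d (dif (fst p) (snd p))} = P1"
    unfolding P1_def using isp_dif_iff by auto
  also have "{p\<in>{p. fst p < snd p \<and> snd p < n}. \<not> isp T n d (sm (fst p) (snd p))} = P2"
    unfolding P2_def using isp_sm_iff g_le by (force simp: le_less)
  also have "(if T = TD then {} else sh T ` {i\<in>{..<n}. \<not> isp T n d (sh T i)}) = SH3"
  proof (cases "T = TD")
    case False
    have "{i\<in>{..<n}. \<not> isp T n d (sh T i)} = P3"
      unfolding P3_def using isp_sh_iff[OF False] g_le by (force simp: le_less)
    then show ?thesis using False by (simp add: SH3_def)
  next
    case True
    then show ?thesis unfolding SH3_def by simp
  qed
  finally show ?thesis .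
qed

end



lemma sum_e_idx: "finite A \<Longrightarrow> (\<Sum>i\<in>A. e i x) = (if x \<in> A then 1 else 0)"
  by (simp add: e_def sum.delta)

context bcd begin

lemma s1: "x < n \<Longrightarrow> (\<Sum>p\<in>P1. dif (fst p) (snd p) x)
   = int (card {j\<in>{..<n}. g x < g j}) - int (card {i\<in>{..<n}. g i < g x})"
proof -
  assume x: "x < n"
  have "(\<Sum>p\<in>P1. dif (fst p) (snd p) x) = int (card {j. (x, j) \<in> P1}) - int (card {i. (i, x) \<in> P1})"
    by (rule pairsum_dif[OF fin12(1)])
  also have "{j. (x, j) \<in> P1} = {j\<in>{..<n}. g x < g j}"
  proof (rule set_eqI, rule iffI)
    fix j assume "j \<in> {j. (x, j) \<in> P1}"
    then have "x < j" "j < n" "g x \<noteq> g j" by (auto simp: P1_def)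
    moreover have "g x \<le> g j" using \<open>x < j\<close> by (simp add: gg_mono)
    ultimately show "j \<in> {j\<in>{..<n}. g x < g j}" by simp
  next
    fix j assume "j \<in> {j\<in>{..<n}. g x < g j}"
    then have a: "j < n" "g x < g j" by auto
    have "x < j" proof (rule ccontr)
      assume "\<not> x < j" then have "g j \<le> g x" by (simp add: gg_mono)
      then show False using a by simp
    qed
    then show "j \<in> {j. (x, j) \<in> P1}" using a by (simp add: P1_def)
  qed
  also have "{i. (i, x) \<in> P1} = {i\<in>{..<n}. g i < g x}"
  proof (rule set_eqI, rule iffI)
    fix j assume "j \<in> {j. (j, x) \<in> P1}"
    then have "j < x" "x < n" "g j \<noteq> g x" by (auto simp: P1_def)
    moreover have "g j \<le> g x" using \<open>j < x\<close> by (simp add: gg_mono)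
    ultimately show "j \<in> {j\<in>{..<n}. g j < g x}" by simp
  next
    fix j assume "j \<in> {j\<in>{..<n}. g j < g x}"
    then have a: "j < n" "g j < g x" by auto
    have "j < x" proof (rule ccontr)
      assume "\<not> j < x" then have "g x \<le> g j" by (simp add: gg_mono)
      then show False using a by simp
    qed
    then show "j \<in> {j. (j, x) \<in> P1}" using a x by (simp add: P1_def)
  qed
  finally show ?thesis .
qed

lemma s2: "x < n \<Longrightarrow> (\<Sum>p\<in>P2. sm (fst p) (snd p) x)
   = int (card {j. (x, j) \<in> P2}) + int (card {i. (i, x) \<in> P2})"
  by (rule pairsum_sm[OF fin12(2)])

lemma s3: "(\<Sum>\<alpha>\<in>SH3. \<alpha> x) = eps T * (if x \<in> P3 then 1 else 0)"
proof (cases "T = TD")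
  case True then show ?thesis unfolding SH3_def eps_def by simp
next
  case False
  have "(\<Sum>\<alpha>\<in>SH3. \<alpha> x) = (\<Sum>i\<in>P3. sh T i x)"
    using False unfolding SH3_def
    by (simp add: sum.reindex[OF inj_sh])
  also have "\<dots> = eps T * (if x \<in> P3 then 1 else 0)"
    using False nA fin12(3) by (cases T) (auto simp: sh_def eps_def sum_e_idx sum_distrib_left[symmetric])
  finally show ?thesis .
qed

lemma sigB: assumes x: "x < n"
  shows "koszul_form T n d x = (if g x < m then int (card {j\<in>{..<n}. g x < g j})
      - int (card {i\<in>{..<n}. g i < g x}) + int n - 1 + eps T else 0)"
proof -
  let ?U1 = "(\<lambda>p. dif (fst p) (snd p)) ` P1" and ?U2 = "(\<lambda>p. sm (fst p) (snd p)) ` P2"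
  have f1: "finite ?U1" "finite ?U2" "finite SH3" using fin12 by (auto simp: SH3_def)
  have d12: "?U1 \<inter> ?U2 = {}"
  proof (rule equals0I)
    fix a assume "a \<in> ?U1 \<inter> ?U2"
    then obtain p q where "p \<in> P1" "a = dif (fst p) (snd p)" "a = sm (fst q) (snd q)" by blast
    moreover have "fst p \<noteq> snd p" using \<open>p \<in> P1\<close> by (simp add: P1_def)
    ultimately show False using dif_ne_sm[of "fst p" "snd p" "fst q" "snd q"] by simp
  qed
  have d3: "(?U1 \<union> ?U2) \<inter> SH3 = {}"
  proof (rule equals0I)
    fix a assume a: "a \<in> (?U1 \<union> ?U2) \<inter> SH3"
    then obtain c where c: "a = sh T c" by (auto simp: SH3_def split: if_splits)
    from a have "a \<in> ?U1 \<or> a \<in> ?U2" by blast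
    then show False
    proof
      assume "a \<in> ?U1"
      then obtain p where "p \<in> P1" "a = dif (fst p) (snd p)" by blast
      moreover have "fst p \<noteq> snd p" using \<open>p \<in> P1\<close> by (simp add: P1_def)
      ultimately show False using dif_ne_sh[of "fst p" "snd p" T c] c by simp
    next
      assume "a \<in> ?U2"
      then obtain p where "p \<in> P2" "a = sm (fst p) (snd p)" by blast
      moreover have "fst p \<noteq> snd p" using \<open>p \<in> P2\<close> by (simp add: P2_def)
      ultimately show False using sm_ne_sh[of "fst p" "snd p" T c] c by simp
    qed
  qed
  have "koszul_form T n d x = (\<Sum>\<alpha>\<in>?U1. \<alpha> x) + (\<Sum>\<alpha>\<in>?U2. \<alpha> x) + (\<Sum>\<alpha>\<in>SH3. \<alpha> x)"
    unfolding koszul_form_def complB using f1 d12 d3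
    by (simp add: sum.union_disjoint)
  also have "(\<Sum>\<alpha>\<in>?U1. \<alpha> x) = (\<Sum>p\<in>P1. dif (fst p) (snd p) x)"
    by (rule sum.reindex[unfolded comp_def]) (rule inj_on_subset[OF inj_dif], auto simp: P1_def)
  also have "(\<Sum>\<alpha>\<in>?U2. \<alpha> x) = (\<Sum>p\<in>P2. sm (fst p) (snd p) x)"
    by (rule sum.reindex[unfolded comp_def]) (rule inj_on_subset[OF inj_sm], auto simp: P2_def)
  finally have K: "koszul_form T n d x = int (card {j\<in>{..<n}. g x < g j}) - int (card {i\<in>{..<n}. g i < g x})
      + (int (card {j. (x, j) \<in> P2}) + int (card {i. (i, x) \<in> P2})) + eps T * (if x \<in> P3 then 1 else 0)"
    using s1[OF x] s2[OF x] s3 by simp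
  show ?thesis
  proof (cases "g x < m")
    case True
    have a: "{j. (x, j) \<in> P2} = {Suc x..<n}" using True by (auto simp: P2_def)
    have b: "{i. (i, x) \<in> P2} = {..<x}"
    proof -
      have "\<And>i. i < x \<Longrightarrow> g i < m"
      proof -
        fix i assume "i < x" then have "g i \<le> g x" by (simp add: gg_mono)
        then show "g i < m" using True by simp
      qed
      then show ?thesis using x by (auto simp: P2_def)
    qed
    have "int (n - Suc x) + int x = int n - 1" using x by simp
    then show ?thesis using K a b True x by (simp add: P3_def)
  next
    case False
    then have gx: "g x = m" using g_le[of x] by simp
    have a: "{j. (x, j) \<in> P2} = {}" using gx by (auto simp: P2_def)
    have c: "{j\<in>{..<n}. g x < g j} = {}" using gx g_le by (auto simp: not_less)
    have b: "{i. (i, x) \<in> P2} = {i\<in>{..<n}. g i < g x}"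
    proof (rule set_eqI, rule iffI)
      fix i assume "i \<in> {i. (i, x) \<in> P2}" then show "i \<in> {i\<in>{..<n}. g i < g x}" using gx x by (auto simp: P2_def)
    next
      fix i assume i: "i \<in> {i\<in>{..<n}. g i < g x}"
      have "i < x" proof (rule ccontr)
        assume "\<not> i < x" then have "g x \<le> g i" by (simp add: gg_mono)
        then show False using i by simp
      qed
      then show "i \<in> {i. (i, x) \<in> P2}" using i gx x by (auto simp: P2_def)
    qed
    show ?thesis using K a b c gx by (simp add: P3_def)
  qed
qed

end



lemma card_part: fixes f :: "'a \<Rightarrow> nat" shows "finite A \<Longrightarrow> card A = card {y\<in>A. f y < b} + card {y\<in>A. f y = b} + card {y\<in>A. b < f y}"
proof -
  assume fA: "finite A"
  let ?X = "{y\<in>A. f y < b}" and ?Y = "{y\<in>A. f y = b}" and ?Z = "{y\<in>A. b < f y}"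
  have fX: "finite ?X" "finite ?Y" "finite ?Z" using fA by auto
  have e: "A = (?X \<union> ?Y) \<union> ?Z" by auto
  have d1: "(?X \<union> ?Y) \<inter> ?Z = {}" by auto
  have d2: "?X \<inter> ?Y = {}" by auto
  have "card ((?X \<union> ?Y) \<union> ?Z) = card (?X \<union> ?Y) + card ?Z"
    using fX d1 by (intro card_Un_disjoint) auto
  also have "card (?X \<union> ?Y) = card ?X + card ?Y" using fX d2 by (intro card_Un_disjoint) auto
  finally show ?thesis using e by simp
qed

context bcd begin

definition sz where "sz b = card {y\<in>{..<n}. g y = b}"
definition aft where "aft b = card {j\<in>{..<n}. b < g j}"
definition bef where "bef b = card {j\<in>{..<n}. g j < b}"
definition Sig where "Sig b = (if b < m then int (aft b) - int (bef b) + int n - 1 + eps T else 0)"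

lemma sigS: "x < n \<Longrightarrow> koszul_form T n d x = Sig (g x)"
  using sigB by (simp add: Sig_def aft_def bef_def)

lemma part: "n = bef b + sz b + aft b"
  using card_part[of "{..<n}" g b] by (simp add: bef_def sz_def aft_def)

lemma nc: "ncoords T n = n" using nA by (simp add: ncoords_def)

lemma cp_dif: "Suc k < n \<Longrightarrow> coroot_pairing T n (koszul_form T n d) (simple_root T n k)
   = of_int (Sig (g k) - Sig (g (Suc k)))"
proof -
  assume k: "Suc k < n"
  have i1: "inner (ncoords T n) (koszul_form T n d) (simple_root T n k) = Sig (g k) - Sig (g (Suc k))"
    using k by (simp add: sr_dif nc inner_dif sigS)
  have i2: "inner (ncoords T n) (simple_root T n k) (simple_root T n k) = 2"
    using k by (simp add: sr_dif nc inner_dif dif_ne)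
  show ?thesis unfolding coroot_pairing_def i1 i2 by simp
qed

lemma cp_last: "coroot_pairing T n (koszul_form T n d) (simple_root T n (n - 1))
   = of_int (if T = TD then Sig (g (n - 2)) + Sig (g (n - 1)) else if T = TB then 2 * Sig (g (n - 1)) else Sig (g (n - 1)))"
proof -
  have n1: "n - 1 < n" "n - 2 < n" using n2 by auto
  have c: "T = TB \<or> T = TC \<or> T = TD" using nA by (cases T) auto
  then show ?thesis
  proof (elim disjE)
    assume TB: "T = TB"
    have sr: "simple_root T n (n - 1) = e (n - 1)" using TB srB by simp
    have i1: "inner (ncoords T n) (koszul_form T n d) (simple_root T n (n - 1)) = Sig (g (n - 1))"
      unfolding sr using n1 by (simp add: nc inner_e sigS)
    have i2: "inner (ncoords T n) (simple_root T n (n - 1)) (simple_root T n (n - 1)) = 1"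
      unfolding sr using n1 inner_e[of "n - 1" n "e (n - 1)"] by (simp add: nc e_def)
    have nd: "T \<noteq> TD" using TB by simp
    show ?thesis unfolding coroot_pairing_def i1 i2 if_not_P[OF nd] if_P[OF TB] by simp
  next
    assume TC: "T = TC"
    have sr: "simple_root T n (n - 1) = (\<lambda>x. 2 * e (n - 1) x)" using TC srC by simp
    have i1: "inner (ncoords T n) (koszul_form T n d) (simple_root T n (n - 1)) = 2 * Sig (g (n - 1))"
      unfolding sr using n1 by (simp add: nc inner_2e sigS)
    have i2: "inner (ncoords T n) (simple_root T n (n - 1)) (simple_root T n (n - 1)) = 4"
      unfolding sr using n1 inner_2e[of "n - 1" n "\<lambda>x. 2 * e (n - 1) x"] by (simp add: nc e_def)
    have nd: "T \<noteq> TD" "T \<noteq> TB" using TC by simp_all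
    show ?thesis unfolding coroot_pairing_def i1 i2 if_not_P[OF nd(1)] if_not_P[OF nd(2)] by simp
  next
    assume TD: "T = TD"
    have sr: "simple_root T n (n - 1) = sm (n - 2) (n - 1)" using TD srD by simp
    have i1: "inner (ncoords T n) (koszul_form T n d) (simple_root T n (n - 1)) = Sig (g (n - 2)) + Sig (g (n - 1))"
      unfolding sr using n1 by (simp add: nc inner_sm sigS)
    have i2: "inner (ncoords T n) (simple_root T n (n - 1)) (simple_root T n (n - 1)) = 2"
    proof -
      have ne: "n - Suc 0 \<noteq> n - 2" using n2 by arith
      show ?thesis unfolding sr using n1 ne inner_sm[of "n - 2" n "n - 1" "sm (n - 2) (n - 1)"] by (simp add: nc sm_def e_def)
    qed
    show ?thesis unfolding coroot_pairing_def i1 i2 if_P[OF TD] by simp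
  qed
qed

lemma white0: "k < n \<Longrightarrow> \<not> d ! k \<Longrightarrow> coroot_pairing T n (koszul_form T n d) (simple_root T n k) = 0"
proof -
  assume k: "k < n" "\<not> d ! k"
  show ?thesis
  proof (cases "Suc k < n")
    case True
    then show ?thesis using cp_dif gS[OF k(1)] k by simp
  next
    case False
    then have kk: "k = n - 1" using k by simp
    have gl: "g (n - 1) = m" using gS[of "n - 1"] n2 k kk gn by simp
    have S0: "Sig m = 0" by (simp add: Sig_def)
    show ?thesis
    proof (cases "T = TD")
      case True
      have "g (n - 2) = m" using gD[OF True] gl by simp
      then show ?thesis using kk gl S0 cp_last unfolding if_P[OF True] by simp
    next
      case False
      then show ?thesis using kk gl S0 cp_last unfolding if_not_P[OF False] by (simp split: if_splits)
    qed
  qed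
qed

lemma black_g: "k < n \<Longrightarrow> d ! k \<Longrightarrow> g (Suc k) = Suc (g k) \<and> Suc (g k) \<le> m"
  using gS[of k] g_le[of "Suc k"] by simp

lemma K1: "Suc k < n \<Longrightarrow> d ! k \<Longrightarrow> Suc (g k) < m \<Longrightarrow>
   coroot_pairing T n (koszul_form T n d) (simple_root T n k) = of_nat (sz (g k) + sz (Suc (g k)))"
proof -
  assume k: "Suc k < n" "d ! k" "Suc (g k) < m"
  have gk: "g (Suc k) = Suc (g k)" using black_g k by simp
  have a: "aft (g k) = aft (Suc (g k)) + sz (Suc (g k))"
    unfolding aft_def sz_def by (rule card_gt_split) simp
  have b: "bef (Suc (g k)) = bef (g k) + sz (g k)"
    unfolding bef_def sz_def by (rule card_lt_split) simp
  show ?thesis using cp_dif[OF k(1)] gk a b k(3) by (simp add: Sig_def)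
qed

lemma K2: "Suc k < n \<Longrightarrow> d ! k \<Longrightarrow> Suc (g k) = m \<Longrightarrow>
   coroot_pairing T n (koszul_form T n d) (simple_root T n k) = of_int (int (sz (g k)) + 2 * int (sz m) - 1 + eps T)"
proof -
  assume k: "Suc k < n" "d ! k" "Suc (g k) = m"
  have gk: "g (Suc k) = m" using black_g k by simp
  have "{j\<in>{..<n}. g k < g j} = {j\<in>{..<n}. g j = m}"
  proof (rule Collect_cong)
    fix j show "(j \<in> {..<n} \<and> g k < g j) = (j \<in> {..<n} \<and> g j = m)" using k(3) g_le[of j] by auto
  qed
  then have a: "aft (g k) = sz m" by (simp add: aft_def sz_def)
  have p: "n = bef (g k) + sz (g k) + aft (g k)" by (rule part)
  show ?thesis using cp_dif[OF k(1)] gk a k(3) p by (simp add: Sig_def)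
qed

lemma K3: "d ! (n - 1) \<Longrightarrow>
   coroot_pairing T n (koszul_form T n d) (simple_root T n (n - 1))
   = of_int (if T = TB then 2 * int (sz (g (n - 1))) else if T = TC then int (sz (g (n - 1))) + 1
             else 2 * int (sz (g (n - 1))) - 2)"
proof -
  assume bk: "d ! (n - 1)"
  let ?b = "g (n - 1)"
  have gk: "g n = Suc ?b" "Suc ?b \<le> m" using black_g[of "n - 1"] bk n2 by auto
  then have bm: "?b < m" by simp
  have "{j\<in>{..<n}. ?b < g j} = {}"
  proof -
    have "\<And>j. j < n \<Longrightarrow> g j \<le> ?b" by (rule gg_mono) simp
    then show ?thesis using leD by blast
  qed
  then have a: "aft ?b = 0" by (simp add: aft_def)
  have p: "n = bef ?b + sz ?b + aft ?b" by (rule part)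
  have S: "Sig ?b = int (sz ?b) - 1 + eps T" using a p bm by (simp add: Sig_def)
  have c: "T = TB \<or> T = TC \<or> T = TD" using nA by (cases T) auto
  then show ?thesis
  proof (elim disjE)
    assume TB: "T = TB"
    then have nd: "T \<noteq> TD" "eps T = 1" by (simp_all add: eps_def)
    show ?thesis using cp_last S unfolding if_not_P[OF nd(1)] if_P[OF TB] nd(2) by simp
  next
    assume TC: "T = TC"
    then have nd: "T \<noteq> TD" "T \<noteq> TB" "eps T = 2" by (simp_all add: eps_def)
    show ?thesis using cp_last S unfolding if_not_P[OF nd(1)] if_not_P[OF nd(2)] if_P[OF TC] nd(3) by simp
  next
    assume TD: "T = TD"
    then have nd: "T \<noteq> TC" "T \<noteq> TB" "eps T = 0" by (simp_all add: eps_def)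
    have "g (n - 2) = ?b" using gD[OF TD] by simp
    then show ?thesis using cp_last S unfolding if_not_P[OF nd(1)] if_not_P[OF nd(2)] if_P[OF TD] nd(3) by simp
  qed
qed

end



definition blk :: "nat \<Rightarrow> bool list" where "blk a = replicate (a - 1) False @ [True]"
definition DL :: "nat list \<Rightarrow> bool list" where "DL L = concat (map blk L)"

lemma cnt_append: "cnt (xs @ ys) = cnt xs + cnt ys" by (simp add: cnt_def)
lemma cnt_replF: "cnt (replicate k False) = 0" by (simp add: cnt_def)

lemma gg_append: "gg (xs @ ys) y = (if y \<le> length xs then gg xs y else cnt xs + gg ys (y - length xs))"
  by (simp add: gg_def cnt_append cnt_def)

lemma gg_0: "gg xs 0 = 0" by (simp add: gg_def cnt_def)

lemma DL_Cons: "DL (a # L) = blk a @ DL L" by (simp add: DL_def)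
lemma DL_Nil: "DL [] = []" by (simp add: DL_def)

lemma len_DL: "\<forall>a\<in>set L. 1 \<le> a \<Longrightarrow> length (DL L) = sum_list L"
  by (induction L) (auto simp: DL_def blk_def)

lemma cnt_DL: "cnt (DL L) = length L"
  by (induction L) (auto simp: DL_def blk_def cnt_def)

lemma gg_blk: "1 \<le> a \<Longrightarrow> y < a \<Longrightarrow> gg (blk a) y = 0"
  by (simp add: gg_def blk_def cnt_def take_append min_def)

lemma cnt_blk: "cnt (blk a) = 1" by (simp add: blk_def cnt_def)
lemma len_blk: "1 \<le> a \<Longrightarrow> length (blk a) = a" by (simp add: blk_def)

lemma size_DL: "\<forall>a\<in>set L. 1 \<le> a \<Longrightarrow> b < length L \<Longrightarrow>
   card {y\<in>{..<sum_list L}. gg (DL L) y = b} = L ! b"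
proof (induction L arbitrary: b)
  case Nil then show ?case by simp
next
  case (Cons a L)
  have a1: "1 \<le> a" using Cons.prems by simp
  have gg: "\<And>y. gg (DL (a # L)) y = (if y < a then 0 else Suc (gg (DL L) (y - a)))"
  proof -
    fix y
    show "gg (DL (a # L)) y = (if y < a then 0 else Suc (gg (DL L) (y - a)))"
    proof (cases "y < a")
      case True then show ?thesis using a1 gg_blk[OF a1 True] by (simp add: DL_Cons gg_append len_blk)
    next
      case False
      show ?thesis
      proof (cases "y = a")
        case True
        then show ?thesis using a1 by (simp add: DL_Cons gg_append len_blk gg_def cnt_blk[unfolded cnt_def] gg_0 cnt_def)
      next
        case F2: False
        then show ?thesis using False a1 by (simp add: DL_Cons gg_append len_blk cnt_blk)
      qed
    qed
  qed
  show ?case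
  proof (cases b)
    case 0
    have "{y\<in>{..<sum_list (a # L)}. gg (DL (a # L)) y = b} = {..<a}"
      using 0 gg by auto
    then show ?thesis using 0 by simp
  next
    case (Suc b')
    have bl: "b' < length L" using Cons.prems Suc by simp
    have "{y\<in>{..<sum_list (a # L)}. gg (DL (a # L)) y = b} = (\<lambda>y. y + a) ` {y\<in>{..<sum_list L}. gg (DL L) y = b'}"
    proof (rule set_eqI, rule iffI)
      fix y assume y: "y \<in> {y\<in>{..<sum_list (a # L)}. gg (DL (a # L)) y = b}"
      then have ya: "\<not> y < a" using gg Suc by auto
      then have "y - a \<in> {y\<in>{..<sum_list L}. gg (DL L) y = b'}" using y gg Suc by auto
      then show "y \<in> (\<lambda>y. y + a) ` {y\<in>{..<sum_list L}. gg (DL L) y = b'}"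
        using ya by (intro image_eqI[where x="y - a"]) auto
    next
      fix y assume "y \<in> (\<lambda>y. y + a) ` {y\<in>{..<sum_list L}. gg (DL L) y = b'}"
      then obtain z where "y = z + a" "z < sum_list L" "gg (DL L) z = b'" by auto
      then show "y \<in> {y\<in>{..<sum_list (a # L)}. gg (DL (a # L)) y = b}" using gg Suc by auto
    qed
    moreover have "inj_on (\<lambda>y. y + a) A" for A by (simp add: inj_on_def)
    ultimately show ?thesis using Cons.IH[OF _ bl] Cons.prems Suc by (simp add: card_image)
  qed
qed

lemma black_list: "map (gg d) (filter (\<lambda>k. d ! k) [0..<length d]) = [0..<cnt d]"
proof (induction d rule: rev_induct)
  case Nil then show ?case by (simp add: cnt_def)
next
  case (snoc a xs)
  have f: "filter (\<lambda>k. (xs @ [a]) ! k) [0..<length xs] = filter (\<lambda>k. xs ! k) [0..<length xs]"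
    by (rule filter_cong) (auto simp: nth_append)
  have m: "map (gg (xs @ [a])) (filter (\<lambda>k. xs ! k) [0..<length xs]) = map (gg xs) (filter (\<lambda>k. xs ! k) [0..<length xs])"
    by (rule map_cong) (auto simp: gg_append)
  have g: "gg (xs @ [a]) (length xs) = cnt xs" by (simp add: gg_append gg_def)
  show ?case using snoc.IH f m g by (cases a) (simp_all add: cnt_append cnt_def)
qed




lemma concat_repl: "concat (replicate k [x]) = replicate k x"
  by (induction k) auto

lemma J0_eq: "J0_diagram T n0 ns r =
   (if T = TA then butlast (DL (replicate n0 1 @ ns)) else DL (replicate n0 1 @ ns) @ replicate r False)"
proof -
  have "replicate n0 True @ concat (map (\<lambda>m. replicate (m - 1) False @ [True]) ns) = DL (replicate n0 1 @ ns)"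
    by (simp add: DL_def blk_def[abs_def] concat_repl)
  then show ?thesis by (simp add: J0_diagram_def Let_def)
qed

lemma DL_snoc: "L \<noteq> [] \<Longrightarrow> DL L = DL (butlast L) @ replicate (last L - 1) False @ [True]"
proof -
  assume "L \<noteq> []"
  then have "L = butlast L @ [last L]" by simp
  then have "DL L = DL (butlast L @ [last L])" by simp
  then show ?thesis by (simp add: DL_def blk_def)
qed

lemma DL_butlast: "L \<noteq> [] \<Longrightarrow> DL L = butlast (DL L) @ [True]"
proof -
  assume ne: "L \<noteq> []"
  define Y where "Y = DL (butlast L) @ replicate (last L - 1) False"
  have "DL L = Y @ [True]" using DL_snoc[OF ne] by (simp add: Y_def)
  then show ?thesis by simp
qed

locale flg =
  fixes n0 :: nat and ns :: "nat list" and r :: nat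
  assumes nsne: "ns \<noteq> []" and ns1: "\<forall>m\<in>set ns. 1 < m"
begin

definition "L = replicate n0 1 @ ns"
definition "G = DL L"
abbreviation "m \<equiv> length L"

lemma L1: "\<forall>a\<in>set L. 1 \<le> a" using ns1 by (auto simp: L_def)
lemma Lne: "L \<noteq> []" using nsne by (simp add: L_def)
lemma lastL1: "last L = last ns"
  using nsne by (simp add: L_def)
lemma lastL: "last L = last ns" "L ! (m - 1) = last ns"
  using lastL1 last_conv_nth[OF Lne] by simp_all
lemma ls2: "2 \<le> last ns" using ns1 nsne last_in_set[OF nsne] by fastforce
lemma lenG: "length G = sum_list L" using len_DL[OF L1] by (simp add: G_def)
lemma cntG: "cnt G = m" by (simp add: G_def cnt_DL)
lemma SL: "sum_list L = n0 + sum_list ns" by (simp add: L_def sum_list_replicate)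
lemma S2: "2 \<le> sum_list L"
proof -
  have "last ns \<le> sum_list ns" using nsne by (simp add: member_le_sum_list)
  then show ?thesis using ls2 SL by simp
qed
lemma Gsnoc: "G = butlast G @ [True]" using DL_butlast[OF Lne] by (simp add: G_def)
lemma cnt_bG: "cnt (butlast G) = m - 1"
proof -
  have "cnt G = cnt (butlast G @ [True])" using Gsnoc by simp
  then have "cnt G = cnt (butlast G) + 1" by (simp add: cnt_append cnt_def)
  then show ?thesis using cntG by simp
qed

lemma gG_lt: "y < length G \<Longrightarrow> gg G y < m"
proof -
  assume y: "y < length G"
  have "gg G y = gg (butlast G @ [True]) y" using Gsnoc by simp
  also have "\<dots> = gg (butlast G) y"
  proof -
    have "y \<le> length (butlast G)" using y by simp
    then show ?thesis by (simp only: gg_append if_True)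
  qed
  also have "\<dots> \<le> cnt (butlast G)" by (rule gg_le)
  finally have "gg G y \<le> m - 1" using cnt_bG by simp
  moreover have "0 < m" using Lne by simp
  ultimately show ?thesis by linarith
qed

lemma gG_ge: "length G \<le> y \<Longrightarrow> gg G y = m" using gg_len cntG by simp

lemma szG: "b < m \<Longrightarrow> card {y\<in>{..<length G}. gg G y = b} = L ! b"
  using size_DL[OF L1] lenG by (simp add: G_def)

lemma GD2: "G ! (length G - 2) = False"
proof -
  have "G = DL (butlast L) @ replicate (last ns - 1) False @ [True]"
    using DL_snoc[OF Lne] lastL by (simp add: G_def)
  moreover have "replicate (last ns - 1) False @ [True] = replicate (last ns - 2) False @ [False, True]"
  proof -
    have "last ns - 1 = Suc (last ns - 2)" using ls2 by simp
    then show ?thesis by (simp add: replicate_append_same[symmetric])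
  qed
  ultimately have eq: "G = (DL (butlast L) @ replicate (last ns - 2) False) @ [False, True]" by simp
  define A where "A = DL (butlast L) @ replicate (last ns - 2) False"
  have eq2: "G = A @ [False, True]" using eq by (simp add: A_def)
  have "length G - 2 = length A" using eq2 by simp
  then show ?thesis using eq2 by (simp add: nth_append)
qed

end



context flg begin

lemma mainA:
  defines "n \<equiv> sum_list L - 1" and "d \<equiv> butlast G"
  shows "koszul_numbers TA n d = map of_nat (map (\<lambda>i. L ! i + L ! (i + 1)) [0..<m - 1])
     \<and> (\<forall>i<n. \<not> d ! i \<longrightarrow> coroot_pairing TA n (koszul_form TA n d) (simple_root TA n i) = 0)"
proof -
  have ln: "length d = n" using lenG by (simp add: d_def n_def)
  have Gd: "G = d @ [True]" using Gsnoc by (simp add: d_def)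
  have gd: "\<And>y. y \<le> n \<Longrightarrow> gg d y = gg G y"
  proof -
    fix y assume "y \<le> n"
    then have "y \<le> length d" using ln by simp
    then show "gg d y = gg G y" unfolding Gd by (simp only: gg_append if_True)
  qed
  have lG: "length G = Suc n" using lenG S2 by (simp add: n_def)
  have sz: "\<And>b. b < m \<Longrightarrow> szA n d b = L ! b"
  proof -
    fix b assume b: "b < m"
    have "{y\<in>{..n}. gg d y = b} = {y\<in>{..<length G}. gg G y = b}"
      using gd lG by auto
    then show "szA n d b = L ! b" using szG[OF b] by (simp add: szA_def)
  qed
  have cd: "cnt d = m - 1" using cnt_bG by (simp add: d_def)
  let ?H = "\<lambda>b. of_nat (szA n d b + szA n d (Suc b)) :: rat"
  have "koszul_numbers TA n d = map (\<lambda>i. ?H (gg d i)) (filter (\<lambda>i. d ! i) [0..<n])"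
    unfolding koszul_numbers_def
    by (rule map_cong) (auto simp: pairA[OF ln])
  also have "\<dots> = map ?H (map (gg d) (filter (\<lambda>i. d ! i) [0..<length d]))" using ln by simp
  also have "\<dots> = map ?H [0..<m - 1]" using black_list[of d] cd by simp
  also have "\<dots> = map of_nat (map (\<lambda>i. L ! i + L ! (i + 1)) [0..<m - 1])"
    by (simp add: sz)
  finally show ?thesis using pairA[OF ln] by simp
qed

end



context flg begin

definition "lv T = (let ls = last ns in
   if T = TB then (if r = 0 then 2 * ls else ls + 2 * r)
   else if T = TC then ls + 2 * r + 1
   else (if r = 0 then 2 * (ls - 1) else ls + 2 * r - 1))"

lemma mainB:
  assumes nA: "T \<noteq> TA" and D1: "T = TD \<Longrightarrow> r \<noteq> 1"
  defines "n \<equiv> sum_list L + r" and "d \<equiv> G @ replicate r False"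
  shows "koszul_numbers T n d = map of_nat (map (\<lambda>i. L ! i + L ! (i + 1)) [0..<m - 1] @ [lv T])
     \<and> (\<forall>i<n. \<not> d ! i \<longrightarrow> coroot_pairing T n (koszul_form T n d) (simple_root T n i) = 0)"
proof -
  have ln: "length d = n" using lenG by (simp add: d_def n_def)
  have n2: "2 \<le> n" using S2 by (simp add: n_def)
  have dG: "\<And>k. k < length G \<Longrightarrow> d ! k = G ! k" by (simp add: d_def nth_append)
  have dF: "\<And>k. length G \<le> k \<Longrightarrow> k < n \<Longrightarrow> \<not> d ! k"
    using lenG by (simp add: d_def nth_append n_def)
  have Dw: "T = TD \<Longrightarrow> \<not> d ! (n - 2)"
  proof -
    assume TD: "T = TD"
    show "\<not> d ! (n - 2)"
    proof (cases "r = 0")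
      case True
      then have "n - 2 = length G - 2" "length G - 2 < length G" using lenG S2 by (simp_all add: n_def)
      then show ?thesis using dG GD2 by simp
    next
      case False
      then have "2 \<le> r" using D1[OF TD] by simp
      then have "length G \<le> n - 2" using lenG by (simp add: n_def)
      then show ?thesis using dF n2 by simp
    qed
  qed
  interpret B: bcd T n d using nA ln n2 Dw by unfold_locales auto
  have gd: "\<And>y. gg d y = gg G y"
  proof -
    fix y show "gg d y = gg G y"
    proof (cases "y \<le> length G")
      case True then show ?thesis unfolding d_def by (simp only: gg_append if_True)
    next
      case False
      then have "gg d y = cnt G + gg (replicate r False) (y - length G)" unfolding d_def by (simp only: gg_append if_False)
      also have "\<dots> = m" using cntG by (simp add: gg_def cnt_def)
      finally show ?thesis using gG_ge False by simp
    qed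
  qed
  have cd: "cnt d = m" using cntG by (simp add: d_def cnt_append cnt_replF)
  have szb: "\<And>b. b < m \<Longrightarrow> B.sz b = L ! b"
  proof -
    fix b assume b: "b < m"
    have "{y\<in>{..<n}. gg d y = b} = {y\<in>{..<length G}. gg G y = b}"
    proof (rule set_eqI, rule iffI)
      fix y assume "y \<in> {y\<in>{..<n}. gg d y = b}"
      then have "y < n" "gg G y = b" using gd by auto
      moreover have "y < length G" proof (rule ccontr)
        assume "\<not> y < length G" then have "gg G y = m" using gG_ge by simp
        then show False using \<open>gg G y = b\<close> b by simp
      qed
      ultimately show "y \<in> {y\<in>{..<length G}. gg G y = b}" by simp
    next
      fix y assume "y \<in> {y\<in>{..<length G}. gg G y = b}"
      then show "y \<in> {y\<in>{..<n}. gg d y = b}" using gd lenG by (auto simp: n_def)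
    qed
    then show "B.sz b = L ! b" using szG[OF b] by (simp add: B.sz_def)
  qed
  have szm: "B.sz m = r"
  proof -
    have "{y\<in>{..<n}. gg d y = m} = {length G..<n}"
    proof (rule set_eqI, rule iffI)
      fix y assume "y \<in> {y\<in>{..<n}. gg d y = m}"
      then have "y < n" "gg G y = m" using gd by auto
      moreover have "length G \<le> y"
      proof (rule ccontr)
        assume "\<not> length G \<le> y" then have "gg G y < m" by (intro gG_lt) simp
        then show False using \<open>gg G y = m\<close> by simp
      qed
      ultimately show "y \<in> {length G..<n}" by simp
    next
      fix y assume "y \<in> {length G..<n}"
      then show "y \<in> {y\<in>{..<n}. gg d y = m}" using gd gG_ge by auto
    qed
    then have "B.sz m = card {length G..<n}" unfolding B.sz_def by simp
    moreover have "card {length G..<n} = r" using lenG by (simp add: n_def)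
    ultimately show ?thesis by simp
  qed
  have ls: "L ! (m - 1) = last ns" using lastL by simp
  let ?E = "\<lambda>b. of_nat (if Suc b < m then L ! b + L ! Suc b else lv T) :: rat"
  have blk: "\<And>k. k < n \<Longrightarrow> d ! k \<Longrightarrow> coroot_pairing T n (koszul_form T n d) (simple_root T n k) = ?E (gg d k)"
  proof -
    fix k assume k: "k < n" "d ! k"
    let ?b = "gg d k"
    have kG: "k < length G"
    proof (rule ccontr)
      assume "\<not> k < length G" then have "\<not> d ! k" using dF k by simp
      then show False using k by simp
    qed
    have gk: "gg d (Suc k) = Suc ?b" "Suc ?b \<le> m" using B.black_g[OF k] cd by auto
    show "coroot_pairing T n (koszul_form T n d) (simple_root T n k) = ?E ?b"
    proof (cases "Suc ?b < m")
      case True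
      have "Suc k < length G" proof (rule ccontr)
        assume "\<not> Suc k < length G" then have "gg G (Suc k) = m" using gG_ge by simp
        then show False using gk True gd by simp
      qed
      then have "Suc k < n" using lenG by (simp add: n_def)
      then show ?thesis using B.K1[OF _ k(2)] True cd szb True by simp
    next
      case False
      then have bm: "Suc ?b = m" using gk by simp
      have bm1: "?b = m - 1" using bm by simp
      have b1: "?b < m" using bm by simp
      have "B.sz ?b = L ! ?b" using szb[OF b1] .
      also have "L ! ?b = L ! (m - 1)" using bm1 by (rule arg_cong)
      also have "\<dots> = last ns" by (rule ls)
      finally have sb: "B.sz ?b = last ns" .
      have l2: "2 \<le> last ns" by (rule ls2)
      show ?thesis
      proof (cases "Suc k < n")
        case True
        have "\<not> Suc k < length G"
        proof
          assume "Suc k < length G" then have "gg G (Suc k) < m" by (rule gG_lt)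
          then show False using gd gk bm by simp
        qed
        then have r0: "0 < r" using True lenG by (simp add: n_def)
        have c2: "B.m = m" using cd by simp
        have K: "coroot_pairing T n (koszul_form T n d) (simple_root T n k)
            = of_int (int (last ns) + 2 * int r - 1 + eps T)"
          using B.K2[OF True k(2)] bm cd sb szm by simp
        have c: "T = TB \<or> T = TC \<or> T = TD" using nA by (cases T) auto
        then show ?thesis
        proof (elim disjE)
          assume TB: "T = TB" then show ?thesis unfolding lv_def Let_def using K r0 False by (simp add: eps_def Let_def)
        next
          assume TC: "T = TC" then show ?thesis unfolding lv_def Let_def using K r0 False by (simp add: eps_def Let_def)
        next
          assume TD: "T = TD"
          then show ?thesis unfolding lv_def Let_def using K r0 False l2 by (simp add: eps_def of_nat_diff)
        qed
      next
        case F2: False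
        then have kn: "k = n - 1" using k by simp
        then have r0: "r = 0" using kG lenG by (simp add: n_def)
        have K: "coroot_pairing T n (koszul_form T n d) (simple_root T n k)
            = of_int (if T = TB then 2 * int (last ns) else if T = TC then int (last ns) + 1
             else 2 * int (last ns) - 2)"
          using B.K3 k(2) kn sb by simp
        have c: "T = TB \<or> T = TC \<or> T = TD" using nA by (cases T) auto
        then show ?thesis
        proof (elim disjE)
          assume TB: "T = TB" then show ?thesis unfolding lv_def Let_def using K r0 False by (simp add: Let_def)
        next
          assume TC: "T = TC" then show ?thesis unfolding lv_def Let_def using K r0 False by (simp add: Let_def)
        next
          assume TD: "T = TD"
          then show ?thesis unfolding lv_def Let_def using K r0 False l2 by (simp add: of_nat_diff)
        qed
      qed
    qed
  qed
  have "koszul_numbers T n d = map (\<lambda>i. ?E (gg d i)) (filter (\<lambda>i. d ! i) [0..<n])"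
    unfolding koszul_numbers_def
    by (rule map_cong) (auto simp: blk)
  also have "\<dots> = map ?E (map (gg d) (filter (\<lambda>i. d ! i) [0..<length d]))" using ln by simp
  also have "\<dots> = map ?E [0..<m]" using black_list[of d] cd by simp
  also have "[0..<m] = [0..<m - 1] @ [m - 1]" using Lne by (cases m) auto
  also have "map ?E ([0..<m - 1] @ [m - 1]) = map of_nat (map (\<lambda>i. L ! i + L ! (i + 1)) [0..<m - 1] @ [lv T])"
  proof -
    have e1: "map ?E [0..<m - 1] = map of_nat (map (\<lambda>i. L ! i + L ! (i + 1)) [0..<m - 1])"
      unfolding map_map o_def by (rule map_cong) auto
    have e2: "?E (m - 1) = of_nat (lv T)" using Lne by simp
    show ?thesis unfolding map_append list.map e1 e2 ..
  qed
  finally show ?thesis using B.white0 by simp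
qed

end



theorem mainTheorem15:
  fixes T :: ctype and n0 r :: nat and ns :: "nat list"
  assumes "ns \<noteq> []"
    and "\<forall>m \<in> set ns. 1 < m"
    and "T = TA \<Longrightarrow> r = 0"
    and "T = TD \<Longrightarrow> r \<noteq> 1"
  shows "koszul_numbers T (flag_rank T n0 ns r) (J0_diagram T n0 ns r)
           = map of_nat (koszul_expected T n0 ns r)
       \<and> (\<forall>i < flag_rank T n0 ns r. \<not> J0_diagram T n0 ns r ! i \<longrightarrow>
            coroot_pairing T (flag_rank T n0 ns r)
              (koszul_form T (flag_rank T n0 ns r) (J0_diagram T n0 ns r))
              (simple_root T (flag_rank T n0 ns r) i) = 0)"
proof -
  interpret F: flg n0 ns r using assms(1,2) by unfold_locales auto
  have J0: "J0_diagram T n0 ns r = (if T = TA then butlast F.G else F.G @ replicate r False)"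
    using J0_eq by (simp add: F.G_def F.L_def)
  have fr: "flag_rank T n0 ns r = (if T = TA then sum_list F.L - 1 else sum_list F.L + r)"
    by (simp add: flag_rank_def F.SL)
  have ke: "koszul_expected T n0 ns r = (if T = TA then map (\<lambda>i. F.L ! i + F.L ! (i + 1)) [0..<length F.L - 1]
      else map (\<lambda>i. F.L ! i + F.L ! (i + 1)) [0..<length F.L - 1] @ [F.lv T])"
    unfolding koszul_expected_def F.lv_def Let_def F.L_def by simp
  show ?thesis
  proof (cases "T = TA")
    case True
    show ?thesis unfolding J0 fr ke if_P[OF True] using F.mainA True by simp
  next
    case False
    show ?thesis unfolding J0 fr ke if_not_P[OF False] using F.mainB[OF False assms(4)] by simp
  qed
qed



end
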